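(* Let $X\in\mathbb{R}^{n\times p}$ be a fixed matrix with rows $X_1^\top,\dots,X_n^\top$, let $\beta\in\mathbb{R}^p$, let $\epsilon$ be a random vector in $\mathbb{R}^n$, and let $D\subset\mathbb{R}^p$. Let $G:\mathbb{R}^n\to\mathbb{R}$ be a function, and let $\psi=(\psi_1,\dots,\psi_n)$, $\varphi=(\varphi_1,\dots,\varphi_n)$ with each $\psi_i,\varphi_i:\mathbb{R}\to\mathbb{R}$. Fix $q\in(0,1)$ and $c_0>0$. Suppose: (i) there is $c_1>0$ such that $$\Pr\Big\{|\langle \epsilon,\varphi(Xv)-\varphi(X\beta)\rangle|\le c_1\sqrt{n}\,\|v-\beta\|_1 \text{ for all } v\in D\Big\}\ge 1-c_0q;$$ (ii) there is $c_2>0$ such that $G(\psi(Xv)-\psi(X\beta))\ge c_2 n\|v-\beta\|_2^2$ for all $v\in D$. Let $c_r=2c_1\sqrt{n}$ and suppose $\hat\beta\in D$ is a random variable that always satisfies $$G(\psi(X\hat\beta)-\psi(X\beta))\le 2|\langle\epsilon,\varphi(X\hat\beta)-\varphi(X\beta)\rangle| - c_r(\|\hat\beta\|_1-\|\beta\|_1).$$ Then, with $\kappa_r=4c_1/c_2$, $$\Pr\Big\{\|\hat\beta-\beta\|_2\le \kappa_r\sqrt{|\mathrm{spt}(\beta)|/n}\Big\}\ge 1-c_0q.$$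
   Context: For functions $g_1,\dots,g_n:\mathbb{R}\to\mathbb{R}$, $g=(g_1,\dots,g_n)$ and $x\in\mathbb{R}^n$, write $g(x)=(g_1(x_1),\dots,g_n(x_n))^\top$. For $v\in\mathbb{R}^p$, $\|v\|_a$ is the $\ell_a$-norm, and $\mathrm{spt}(v)=\{i: v_i\neq 0\}$ is the support of $v$, with $|\mathrm{spt}(v)|$ its cardinality. $\langle\cdot,\cdot\rangle$ is the Euclidean inner product on $\mathbb{R}^n$. *)

theory Defs
  imports "HOL-Probability.Probability"
begin

definition compapp :: "('n::finite \<Rightarrow> real \<Rightarrow> real) \<Rightarrow> real^'n \<Rightarrow> real^'n" where
  "compapp g x = (\<chi> i. g i (x $ i))"

definition l1norm :: "real^'n::finite \<Rightarrow> real" where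
  "l1norm v = (\<Sum>i\<in>UNIV. \<bar>v $ i\<bar>)"

definition spt :: "real^'n::finite \<Rightarrow> 'n set" where
  "spt v = {i. v $ i \<noteq> 0}"

end

theory Submission
  imports Defs
begin

lemma l1_sub_le:
  fixes b \<beta> :: "real^'p::finite"
  shows "l1norm (b - \<beta>) - (l1norm b - l1norm \<beta>) \<le> 2 * (\<Sum>i\<in>spt \<beta>. \<bar>(b - \<beta>) $ i\<bar>)"
proof -
  have "l1norm (b - \<beta>) - (l1norm b - l1norm \<beta>) = (\<Sum>i\<in>UNIV. \<bar>(b-\<beta>)$i\<bar> - \<bar>b$i\<bar> + \<bar>\<beta>$i\<bar>)"
    unfolding l1norm_def by (simp add: sum_subtractf sum.distrib)
  also have "\<dots> \<le> (\<Sum>i\<in>UNIV. if i \<in> spt \<beta> then 2 * \<bar>(b - \<beta>) $ i\<bar> else 0)"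
    by (rule sum_mono) (auto simp: spt_def)
  also have "\<dots> = 2 * (\<Sum>i\<in>spt \<beta>. \<bar>(b - \<beta>) $ i\<bar>)"
    by (simp add: sum.If_cases sum_distrib_left)
  finally show ?thesis .
qed

lemma sumS_le:
  fixes d :: "real^'p::finite"
  shows "(\<Sum>i\<in>S. \<bar>d $ i\<bar>) \<le> sqrt (real (card S)) * norm d"
proof -
  have "(\<Sum>i\<in>S. \<bar>d $ i\<bar>) = (\<Sum>i\<in>S. \<bar>d $ i\<bar> * \<bar>1\<bar>)" by simp
  also have "\<dots> \<le> L2_set (\<lambda>i. d $ i) S * L2_set (\<lambda>i. 1::real) S"
    by (rule L2_set_mult_ineq)
  also have "L2_set (\<lambda>i. 1::real) S = sqrt (real (card S))"
    by (simp add: L2_set_constant)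
  also have "L2_set (\<lambda>i. d $ i) S \<le> norm d"
  proof -
    have "(\<Sum>i\<in>S. (d $ i)\<^sup>2) \<le> (\<Sum>i\<in>UNIV. (d $ i)\<^sup>2)"
      by (rule sum_mono2) auto
    then show ?thesis unfolding L2_set_def norm_vec_def by simp
  qed
  hence "L2_set (\<lambda>i. d $ i) S * sqrt (real (card S)) \<le> norm d * sqrt (real (card S))"
    by (simp add: mult_right_mono)
  finally show ?thesis by (simp add: mult.commute)
qed

theorem proposition2p1:
  fixes M :: "'w measure"
    and X :: "real^'p::finite^'n::finite"
    and \<beta> :: "real^'p"
    and \<epsilon> :: "'w \<Rightarrow> real^'n"
    and D :: "(real^'p) set"
    and G :: "real^'n \<Rightarrow> real"
    and \<psi> \<phi> :: "'n \<Rightarrow> real \<Rightarrow> real"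
    and q c0 c1 c2 :: real
    and \<beta>hat :: "'w \<Rightarrow> real^'p"
  assumes "prob_space M"
    and "\<epsilon> \<in> borel_measurable M"
    and "0 < q" "q < 1" "0 < c0"
    and "0 < c1"
    and "{\<omega>\<in>space M. \<forall>v\<in>D. \<bar>\<epsilon> \<omega> \<bullet> (compapp \<phi> (X *v v) - compapp \<phi> (X *v \<beta>))\<bar>
            \<le> c1 * sqrt (real CARD('n)) * l1norm (v - \<beta>)} \<in> sets M"
    and "measure M {\<omega>\<in>space M. \<forall>v\<in>D. \<bar>\<epsilon> \<omega> \<bullet> (compapp \<phi> (X *v v) - compapp \<phi> (X *v \<beta>))\<bar>
            \<le> c1 * sqrt (real CARD('n)) * l1norm (v - \<beta>)} \<ge> 1 - c0 * q"
    and "0 < c2"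
    and "\<forall>v\<in>D. G (compapp \<psi> (X *v v) - compapp \<psi> (X *v \<beta>)) \<ge> c2 * real CARD('n) * (norm (v - \<beta>))\<^sup>2"
    and "\<beta>hat \<in> borel_measurable M"
    and "\<forall>\<omega>\<in>space M. \<beta>hat \<omega> \<in> D"
    and "\<forall>\<omega>\<in>space M. G (compapp \<psi> (X *v \<beta>hat \<omega>) - compapp \<psi> (X *v \<beta>))
            \<le> 2 * \<bar>\<epsilon> \<omega> \<bullet> (compapp \<phi> (X *v \<beta>hat \<omega>) - compapp \<phi> (X *v \<beta>))\<bar>
              - (2 * c1 * sqrt (real CARD('n))) * (l1norm (\<beta>hat \<omega>) - l1norm \<beta>)"
  shows "measure M {\<omega>\<in>space M. norm (\<beta>hat \<omega> - \<beta>)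
            \<le> (4 * c1 / c2) * sqrt (real (card (spt \<beta>)) / real CARD('n))} \<ge> 1 - c0 * q"

proof -
  note A = assms
  interpret P: prob_space M by (rule A(1))
  let ?n = "real CARD('n)"
  let ?s = "real (card (spt \<beta>))"
  let ?E = "{\<omega>\<in>space M. \<forall>v\<in>D. \<bar>\<epsilon> \<omega> \<bullet> (compapp \<phi> (X *v v) - compapp \<phi> (X *v \<beta>))\<bar>
            \<le> c1 * sqrt ?n * l1norm (v - \<beta>)}"
  let ?T = "{\<omega>\<in>space M. norm (\<beta>hat \<omega> - \<beta>)
            \<le> (4 * c1 / c2) * sqrt (?s / ?n)}"
  have sub: "?E \<subseteq> ?T"
  proof
    fix \<omega> assume w: "\<omega> \<in> ?E"
    hence ws: "\<omega> \<in> space M" by auto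
    define b where "b = \<beta>hat \<omega>"
    define d where "d = b - \<beta>"
    have bD: "b \<in> D" using A(12) ws b_def by auto
    have e: "\<bar>\<epsilon> \<omega> \<bullet> (compapp \<phi> (X *v b) - compapp \<phi> (X *v \<beta>))\<bar> \<le> c1 * sqrt ?n * l1norm d"
      using w bD d_def by auto
    have g1: "c2 * ?n * (norm d)\<^sup>2 \<le> G (compapp \<psi> (X *v b) - compapp \<psi> (X *v \<beta>))"
      using A(10) bD d_def by auto
    have g2: "G (compapp \<psi> (X *v b) - compapp \<psi> (X *v \<beta>))
            \<le> 2 * \<bar>\<epsilon> \<omega> \<bullet> (compapp \<phi> (X *v b) - compapp \<phi> (X *v \<beta>))\<bar>
              - (2 * c1 * sqrt ?n) * (l1norm b - l1norm \<beta>)"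
      using A(13) ws b_def by auto
    have sn: "sqrt ?n > 0" by simp
    have c1n: "0 \<le> 2 * c1 * sqrt ?n" using A(6) by simp
    have k: "l1norm d - (l1norm b - l1norm \<beta>) \<le> 2 * (sqrt ?s * norm d)"
      using l1_sub_le[of b \<beta>] sumS_le[of d "spt \<beta>"] unfolding d_def by linarith
    have "c2 * ?n * (norm d)\<^sup>2 \<le> (2 * c1 * sqrt ?n) * (l1norm d - (l1norm b - l1norm \<beta>))"
      using g1 g2 e by (simp add: algebra_simps)
    also have "\<dots> \<le> (2 * c1 * sqrt ?n) * (2 * (sqrt ?s * norm d))"
      using k c1n by (rule mult_left_mono)
    finally have main: "c2 * ?n * (norm d)\<^sup>2 \<le> 4 * c1 * sqrt ?n * sqrt ?s * norm d"
      by (simp add: algebra_simps)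
    have "norm d \<le> (4 * c1 / c2) * sqrt (?s / ?n)"
    proof (cases "norm d = 0")
      case True
      then show ?thesis using A(6) A(9) by simp
    next
      case False
      hence nd: "norm d > 0" by simp
      have "c2 * ?n * norm d \<le> 4 * c1 * sqrt ?n * sqrt ?s"
        using main nd by (simp add: power2_eq_square mult.assoc[symmetric])
      hence "(c2 * sqrt ?n * norm d) * sqrt ?n \<le> (4 * c1 * sqrt ?s) * sqrt ?n"
        by (simp add: algebra_simps)
      hence "c2 * sqrt ?n * norm d \<le> 4 * c1 * sqrt ?s"
        using sn by (rule mult_right_le_imp_le)
      hence "norm d \<le> 4 * c1 * sqrt ?s / (c2 * sqrt ?n)"
        using sn A(9) by (simp add: field_simps)
      also have "\<dots> = (4 * c1 / c2) * sqrt (?s / ?n)"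
        by (simp add: real_sqrt_divide)
      finally show ?thesis .
    qed
    then show "\<omega> \<in> ?T" using ws d_def b_def by auto
  qed
  have Tm: "?T \<in> sets M"
  proof -
    have "(\<lambda>\<omega>. norm (\<beta>hat \<omega> - \<beta>)) \<in> borel_measurable M"
      using A(11) by measurable
    then show ?thesis by measurable
  qed
  have "1 - c0 * q \<le> measure M ?E" using A(8) by simp
  also have "\<dots> \<le> measure M ?T"
    by (rule P.finite_measure_mono[OF sub Tm])
  finally show ?thesis .
qed


end
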